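(* Let $A$ be an $n\times n\times n$ ASHM and $P$ an $n\times n\times n$ permutation hypermatrix. Then $L(A)\preceq_l L(P)$; that is, every row and every column of $L(A)$ is majorized by $z_n=(n,n-1,\ldots,1)$.
   Context: An $n\times n$ alternating sign matrix (ASM) is an $n\times n$ matrix with entries in $\{0,1,-1\}$ such that in every row and column the nonzeros alternate in sign, beginning and ending with $+1$. An $n\times n\times n$ hypermatrix $A=[a_{ijk}]$ is written $A=[A_1,\ldots,A_n]$ with $A_k=[a_{ijk}]_{i,j}$; lines are obtained by fixing two of the three indices. $A$ is an ASHM if all entries lie in $\{0,\pm1\}$ and in every line the nonzeros alternate in sign beginning and ending with $+1$. A permutation hypermatrix is a $(0,1)$-hypermatrix with exactly one $1$ in each line. For an ASHM, $L(A)=1A_1+2A_2+\cdots+nA_n$. For $x,y\in\mathbb R^n$, $x$ is majorized by $y$ ($x\preceq y$) if $\sum_{j=1}^k x_{[j]}\le\sum_{j=1}^k y_{[j]}$ for all $k\le n$ with equality for $k=n$, where $x_{[j]}$ is the $j$-th largest component of $x$. For matrices $X,Y$ of equal size, $X\preceq_l Y$ means every row (column) of $X$ is majorized by the corresponding row (column) of $Y$. *)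

theory Defs
  imports Complex_Main
begin

(* Hypermatrices of size n x n x n are functions nat => nat => nat => int,
   with indices i, j, k ranging over {0..<n} (0-based). *)

type_synonym hypermatrix = "nat \<Rightarrow> nat \<Rightarrow> nat \<Rightarrow> int"

definition alt_sign_line :: "int list \<Rightarrow> bool" where
  "alt_sign_line xs \<longleftrightarrow>
     (let ys = filter (\<lambda>x. x \<noteq> 0) xs in
        ys \<noteq> [] \<and> (\<forall>t<length ys. ys ! t = (if even t then 1 else -1))
        \<and> last ys = 1)"

definition ASHM :: "nat \<Rightarrow> hypermatrix \<Rightarrow> bool" where
  "ASHM n A \<longleftrightarrow>
     (\<forall>i<n. \<forall>j<n. \<forall>k<n. A i j k \<in> {-1, 0, 1}) \<and>
     (\<forall>i<n. \<forall>j<n. alt_sign_line (map (\<lambda>k. A i j k) [0..<n])) \<and>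
     (\<forall>i<n. \<forall>k<n. alt_sign_line (map (\<lambda>j. A i j k) [0..<n])) \<and>
     (\<forall>j<n. \<forall>k<n. alt_sign_line (map (\<lambda>i. A i j k) [0..<n]))"

definition perm_hypermatrix :: "nat \<Rightarrow> hypermatrix \<Rightarrow> bool" where
  "perm_hypermatrix n P \<longleftrightarrow>
     (\<forall>i<n. \<forall>j<n. \<forall>k<n. P i j k \<in> {0, 1}) \<and>
     (\<forall>i<n. \<forall>j<n. card {k. k < n \<and> P i j k = 1} = 1) \<and>
     (\<forall>i<n. \<forall>k<n. card {j. j < n \<and> P i j k = 1} = 1) \<and>
     (\<forall>j<n. \<forall>k<n. card {i. i < n \<and> P i j k = 1} = 1)"

(* L(A) = 1 A_1 + ... + n A_n; with 0-based slice index k the weight is k+1.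
   The result is an n x n matrix, indices i, j < n. *)
definition Lmat :: "nat \<Rightarrow> hypermatrix \<Rightarrow> nat \<Rightarrow> nat \<Rightarrow> real" where
  "Lmat n A i j = (\<Sum>k<n. real (k + 1) * of_int (A i j k))"

definition decr :: "nat \<Rightarrow> (nat \<Rightarrow> real) \<Rightarrow> real list" where
  "decr n x = rev (sort (map x [0..<n]))"

definition majorized :: "nat \<Rightarrow> (nat \<Rightarrow> real) \<Rightarrow> (nat \<Rightarrow> real) \<Rightarrow> bool" where
  "majorized n x y \<longleftrightarrow>
     (\<forall>m\<le>n. (\<Sum>t<m. decr n x ! t) \<le> (\<Sum>t<m. decr n y ! t)) \<and>
     (\<Sum>t<n. decr n x ! t) = (\<Sum>t<n. decr n y ! t)"

definition lmaj :: "nat \<Rightarrow> (nat \<Rightarrow> nat \<Rightarrow> real) \<Rightarrow> (nat \<Rightarrow> nat \<Rightarrow> real) \<Rightarrow> bool" where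
  "lmaj n X Y \<longleftrightarrow>
     (\<forall>i<n. majorized n (\<lambda>j. X i j) (\<lambda>j. Y i j)) \<and>
     (\<forall>j<n. majorized n (\<lambda>i. X i j) (\<lambda>i. Y i j))"

definition zvec :: "nat \<Rightarrow> nat \<Rightarrow> real" where
  "zvec n t = real n - real t"

end

theory Submission
  imports Defs "HOL-Combinatorics.List_Permutation"
begin

lemma sum_filter_nz: "sum_list (filter (\<lambda>x. x \<noteq> (0::int)) zs) = sum_list zs"
  by (induct zs) auto

lemma altsum:
  assumes alt: "\<forall>t<length ys. ys ! t = (if even t then (1::int) else -1)"
  shows "r \<le> length ys \<Longrightarrow> sum_list (take r ys) = (if even r then 0 else 1)"
proof (induct r)
  case 0 then show ?case by simp
next
  case (Suc r)
  then have "r < length ys" by simp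
  then have "take (Suc r) ys = take r ys @ [ys ! r]" by (simp add: take_Suc_conv_app_nth)
  then show ?case using Suc alt \<open>r < length ys\<close> by auto
qed

lemma alt_line:
  assumes "alt_sign_line xs"
  shows "sum_list xs = 1" and "sum_list (take d xs) \<in> {0,1}"
proof -
  define ys where "ys = filter (\<lambda>x. x \<noteq> 0) xs"
  have ne: "ys \<noteq> []" and alt: "\<forall>t<length ys. ys ! t = (if even t then (1::int) else -1)"
    and lst: "last ys = 1"
    using assms unfolding alt_sign_line_def ys_def Let_def by auto
  have "ys ! (length ys - 1) = 1" using lst ne by (simp add: last_conv_nth)
  then have "even (length ys - 1)" using alt ne
    by (metis diff_less less_numeral_extra(1) length_greater_0_conv one_neq_neg_one)
  then have odd: "odd (length ys)" using ne by (cases "length ys") auto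
  have "sum_list ys = 1" using altsum[OF alt, of "length ys"] odd by simp
  then show "sum_list xs = 1" using sum_filter_nz ys_def by simp
  have ysd: "ys = filter (\<lambda>x. x \<noteq> 0) (take d xs) @ filter (\<lambda>x. x \<noteq> 0) (drop d xs)"
    unfolding ys_def by (metis append_take_drop_id filter_append)
  then have eq: "filter (\<lambda>x. x \<noteq> 0) (take d xs) = take (length (filter (\<lambda>x. x \<noteq> 0) (take d xs))) ys"
    by (metis append_eq_conv_conj)
  have le: "length (filter (\<lambda>x. x \<noteq> 0) (take d xs)) \<le> length ys"
    using arg_cong[OF ysd, of length] by simp
  have "sum_list (take d xs) = sum_list (filter (\<lambda>x. x \<noteq> 0) (take d xs))"
    using sum_filter_nz by simp
  also have "\<dots> \<in> {0,1}" using altsum[OF alt le] eq by simp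
  finally show "sum_list (take d xs) \<in> {0,1}" .
qed

lemma line_facts:
  assumes "alt_sign_line (map f [0..<n])"
  shows "(\<Sum>k<n. f k) = 1" and "q \<le> n \<Longrightarrow> (\<Sum>k<q. f k) \<in> {0,1}"
proof -
  have e: "sum_list (map f [0..<r]) = (\<Sum>k<r. f k)" for r
    by (simp add: sum_list_sum_nth atLeast0LessThan)
  show "(\<Sum>k<n. f k) = 1" using alt_line(1)[OF assms] e by simp
  assume "q \<le> n"
  have "take q (map f [0..<n]) = map f [0..<q]" using \<open>q \<le> n\<close> by (simp add: take_map min_def)
  then show "(\<Sum>k<q. f k) \<in> {0,1}" using alt_line(2)[OF assms, of q] e by simp
qed

lemma wsum: "(\<Sum>k<N. int (k+1) * b k) = (\<Sum>q<N. (\<Sum>k<N. b k) - (\<Sum>k<q. b k))"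
proof (induct N)
  case 0 then show ?case by simp
next
  case (Suc N)
  have "(\<Sum>q<Suc N. (\<Sum>k<Suc N. b k) - (\<Sum>k<q. b k))
     = (\<Sum>q<N. ((\<Sum>k<N. b k) - (\<Sum>k<q. b k)) + b N) + b N"
    by (simp add: algebra_simps)
  also have "\<dots> = (\<Sum>q<N. (\<Sum>k<N. b k) - (\<Sum>k<q. b k)) + int N * b N + b N"
    by (simp add: sum.distrib)
  finally show ?case using Suc by (simp add: algebra_simps)
qed

lemma minsum: "m \<le> n \<Longrightarrow> (\<Sum>q<n. min (int m) (int n - int q)) = (\<Sum>t<m. int n - int t)"
proof (induct m)
  case 0
  then show ?case by (simp add: min_def)
next
  case (Suc m)
  have "(\<Sum>q<n. min (int (Suc m)) (int n - int q))
      = (\<Sum>q<n. min (int m) (int n - int q) + (if q < n - m then 1 else 0))"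
    using Suc.prems by (intro sum.cong) auto
  also have "\<dots> = (\<Sum>q<n. min (int m) (int n - int q)) + (\<Sum>q<n. (if q < n - m then 1 else 0))"
    by (simp add: sum.distrib)
  also have "(\<Sum>q<n. (if q < n - m then 1 else 0::int)) = int (n - m)"
  proof -
    have "{..<n} \<inter> {q. q < n - m} = {..<n-m}" by auto
    then show ?thesis by (simp add: sum.If_cases)
  qed
  finally show ?case using Suc by simp
qed

lemma decr_len: "length (decr n x) = n"
  by (simp add: decr_def)

lemma decr_sub:
  assumes "m \<le> n"
  shows "\<exists>S\<subseteq>{..<n}. card S = m \<and> (\<Sum>t<m. decr n x ! t) = sum x S"
proof -
  have "mset (decr n x) = mset (map x [0..<n])" by (simp add: decr_def)
  then obtain f where bij: "bij_betw f {..<length (decr n x)} {..<length (map x [0..<n])}"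
    and nth: "\<forall>i<length (decr n x). decr n x ! i = map x [0..<n] ! (f i)"
    using permutation_Ex_bij by blast
  have bij': "bij_betw f {..<n} {..<n}" using bij by (simp add: decr_len)
  have nth': "\<And>i. i < n \<Longrightarrow> decr n x ! i = x (f i)"
  proof -
    fix i assume "i < n"
    then have "f i < n" using bij' by (auto simp: bij_betw_def)
    then show "decr n x ! i = x (f i)" using nth \<open>i < n\<close> by (simp add: decr_len)
  qed
  have sub: "{..<m} \<subseteq> {..<n}" using assms by auto
  have inj: "inj_on f {..<m}" using bij' sub by (meson bij_betw_def inj_on_subset)
  show ?thesis
  proof (intro exI conjI)
    show "f ` {..<m} \<subseteq> {..<n}" using bij' sub by (auto simp: bij_betw_def)
    show "card (f ` {..<m}) = m" using inj by (simp add: card_image)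
    have "(\<Sum>t<m. decr n x ! t) = (\<Sum>t<m. x (f t))"
      using sub nth' by (intro sum.cong) auto
    also have "\<dots> = sum x (f ` {..<m})" using inj by (simp add: sum.reindex)
    finally show "(\<Sum>t<m. decr n x ! t) = sum x (f ` {..<m})" .
  qed
qed

lemma decr_z: "decr n (zvec n) = map (zvec n) [0..<n]"
proof -
  have "sort (map (zvec n) [0..<n]) = rev (map (zvec n) [0..<n])"
    by (rule properties_for_sort) (auto simp: sorted_iff_nth_mono rev_nth zvec_def)
  then show ?thesis by (simp add: decr_def)
qed

lemma decr_z_nth: "t < n \<Longrightarrow> decr n (zvec n) ! t = real n - real t"
  by (simp add: decr_z zvec_def)

lemma decr_cong: "(\<And>j. j < n \<Longrightarrow> x j = y j) \<Longrightarrow> decr n x = decr n y"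
  unfolding decr_def by (metis (mono_tags, lifting) atLeastLessThan_iff map_eq_conv set_upt)

lemma perm_decr:
  fixes g :: "nat \<Rightarrow> nat"
  assumes inj: "inj_on g {..<n}" and into: "g ` {..<n} \<subseteq> {..<n}"
  shows "decr n (\<lambda>j. real (g j + 1)) = decr n (zvec n)"
proof -
  have surj: "g ` {..<n} = {..<n}" using endo_inj_surj[OF _ into inj] by simp
  have d1: "distinct (map (\<lambda>j. real (g j + 1)) [0..<n])"
    using inj by (simp add: distinct_map inj_on_def atLeast0LessThan)
  have d2: "distinct (map (zvec n) [0..<n])"
    by (simp add: distinct_map inj_on_def zvec_def)
  have "set (map (\<lambda>j. real (g j + 1)) [0..<n]) = (\<lambda>t. real (t+1)) ` (g ` {..<n})"
    by (simp add: atLeast0LessThan image_image)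
  also have "\<dots> = (\<lambda>t. real (t+1)) ` {..<n}" using surj by simp
  also have "\<dots> = set (map (zvec n) [0..<n])"
  proof -
    have "(\<lambda>t. real (t+1)) ` {..<n} = zvec n ` {..<n}"
    proof (rule set_eqI, rule iffI)
      fix y assume "y \<in> (\<lambda>t. real (t+1)) ` {..<n}"
      then obtain t where t: "t < n" "y = real (t+1)" by auto
      then have "y = zvec n (n - 1 - t)" "n - 1 - t < n" by (auto simp: zvec_def of_nat_diff)
      then show "y \<in> zvec n ` {..<n}" by blast
    next
      fix y assume "y \<in> zvec n ` {..<n}"
      then obtain t where t: "t < n" "y = zvec n t" by auto
      then have "y = real ((n - 1 - t) + 1)" "n - 1 - t < n" by (auto simp: zvec_def of_nat_diff)
      then show "y \<in> (\<lambda>t. real (t+1)) ` {..<n}" by blast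
    qed
    then show ?thesis by (simp add: atLeast0LessThan)
  qed
  finally have "mset (map (\<lambda>j. real (g j + 1)) [0..<n]) = mset (map (zvec n) [0..<n])"
    using d1 d2 set_eq_iff_mset_eq_distinct by blast
  then have "sort (map (\<lambda>j. real (g j + 1)) [0..<n]) = sort (map (zvec n) [0..<n])"
    using sort_key_eq_sort_key[of "map (\<lambda>j. real (g j + 1)) [0..<n]" "map (zvec n) [0..<n]" "\<lambda>x. x"]
    by (simp only: inj_on_id2)
  then show ?thesis unfolding decr_def by simp
qed

lemma asm_major:
  fixes B :: "nat \<Rightarrow> nat \<Rightarrow> int"
  assumes rows: "\<And>j. j<n \<Longrightarrow> alt_sign_line (map (\<lambda>k. B j k) [0..<n])"
    and cols: "\<And>k. k<n \<Longrightarrow> alt_sign_line (map (\<lambda>j. B j k) [0..<n])"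
  shows "majorized n (\<lambda>j. \<Sum>k<n. real (k+1) * of_int (B j k)) (zvec n)"
proof -
  define c where "c j q = 1 - (\<Sum>k<q. B j k)" for j q
  define x where "x j = (\<Sum>k<n. real (k+1) * of_int (B j k))" for j
  have c01: "c j q \<in> {0,1}" if "j < n" "q \<le> n" for j q
    using line_facts(2)[OF rows[OF that(1)] that(2)] by (auto simp: c_def)
  have xc: "x j = of_int (\<Sum>q<n. c j q)" if "j < n" for j
  proof -
    have "x j = of_int (\<Sum>k<n. int (k+1) * B j k)" by (simp add: x_def)
    also have "\<dots> = of_int (\<Sum>q<n. (\<Sum>k<n. B j k) - (\<Sum>k<q. B j k))" by (simp only: wsum)
    also have "\<dots> = of_int (\<Sum>q<n. c j q)"
      using line_facts(1)[OF rows[OF that]] by (simp add: c_def)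
    finally show ?thesis .
  qed
  have colsum: "(\<Sum>j<n. c j q) = int n - int q" if "q \<le> n" for q
  proof -
    have "(\<Sum>j<n. c j q) = int n - (\<Sum>j<n. \<Sum>k<q. B j k)"
      by (simp add: c_def sum_subtractf)
    also have "(\<Sum>j<n. \<Sum>k<q. B j k) = (\<Sum>k<q. \<Sum>j<n. B j k)" by (rule sum.swap)
    also have "\<dots> = (\<Sum>k<q. 1)"
      using that line_facts(1)[OF cols] by (intro sum.cong) auto
    finally show ?thesis by simp
  qed
  have key: "(\<Sum>j\<in>S. x j) \<le> (\<Sum>t<card S. real n - real t)" if S: "S \<subseteq> {..<n}" for S
  proof -
    have cS: "card S \<le> n" using card_mono[OF _ S] by simp
    have fin: "finite S" using S finite_subset by blast
    have "(\<Sum>j\<in>S. x j) = of_int (\<Sum>j\<in>S. \<Sum>q<n. c j q)"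
      using S xc by (auto simp: of_int_sum intro!: sum.cong)
    also have "(\<Sum>j\<in>S. \<Sum>q<n. c j q) = (\<Sum>q<n. \<Sum>j\<in>S. c j q)" by (rule sum.swap)
    also have "\<dots> \<le> (\<Sum>q<n. min (int (card S)) (int n - int q))"
    proof (rule sum_mono)
      fix q assume q: "q \<in> {..<n}"
      have "(\<Sum>j\<in>S. c j q) \<le> (\<Sum>j\<in>S. 1)"
      proof (rule sum_mono)
        fix j assume "j \<in> S"
        then have "j < n" using S by auto
        then show "c j q \<le> 1" using c01[of j q] q by fastforce
      qed
      moreover have "(\<Sum>j\<in>S. c j q) \<le> (\<Sum>j<n. c j q)"
      proof (rule sum_mono2)
        fix b assume "b \<in> {..<n} - S"
        then show "0 \<le> c b q" using c01[of b q] q by fastforce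
      qed (use S in auto)
      ultimately show "(\<Sum>j\<in>S. c j q) \<le> min (int (card S)) (int n - int q)"
        using colsum[of q] q by simp
    qed
    also have "\<dots> = (\<Sum>t<card S. int n - int t)" using minsum[OF cS] .
    finally show ?thesis by (simp add: of_int_sum)
  qed
  have total: "(\<Sum>j<n. x j) = (\<Sum>t<n. real n - real t)"
  proof -
    have "(\<Sum>j<n. x j) = of_int (\<Sum>j<n. \<Sum>q<n. c j q)"
      using xc by (auto simp: of_int_sum intro!: sum.cong)
    also have "(\<Sum>j<n. \<Sum>q<n. c j q) = (\<Sum>q<n. \<Sum>j<n. c j q)" by (rule sum.swap)
    also have "\<dots> = (\<Sum>q<n. int n - int q)" using colsum by (intro sum.cong) auto
    finally show ?thesis by (simp add: of_int_sum)
  qed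
  have zs: "(\<Sum>t<m. decr n (zvec n) ! t) = (\<Sum>t<m. real n - real t)" if "m \<le> n" for m
    using that decr_z_nth by (intro sum.cong) auto
  show ?thesis unfolding majorized_def x_def[symmetric]
  proof (intro conjI allI impI)
    fix m assume m: "m \<le> n"
    obtain S where S: "S \<subseteq> {..<n}" "card S = m" "(\<Sum>t<m. decr n x ! t) = sum x S"
      using decr_sub[OF m] by blast
    show "(\<Sum>t<m. decr n x ! t) \<le> (\<Sum>t<m. decr n (zvec n) ! t)"
      using key[OF S(1)] S zs[OF m] by simp
  next
    obtain S where S: "S \<subseteq> {..<n}" "card S = n" "(\<Sum>t<n. decr n x ! t) = sum x S"
      using decr_sub[of n n] by blast
    have "S = {..<n}" using S card_subset_eq by (metis card_lessThan finite_lessThan)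
    then show "(\<Sum>t<n. decr n x ! t) = (\<Sum>t<n. decr n (zvec n) ! t)"
      using S total zs[of n] by simp
  qed
qed

lemma perm_line:
  fixes Pl :: "nat \<Rightarrow> int"
  assumes vals: "\<forall>k<n. Pl k \<in> {0,1}" and c: "card {k. k<n \<and> Pl k = 1} = 1"
  shows "\<exists>k<n. Pl k = 1 \<and> (\<Sum>k'<n. real (k'+1) * of_int (Pl k')) = real (k+1)"
proof -
  obtain k0 where k0: "{k. k<n \<and> Pl k = 1} = {k0}" using c by (rule card_1_singletonE)
  have mem: "(k<n \<and> Pl k = 1) \<longleftrightarrow> k = k0" for k
  proof -
    have "k \<in> {k. k<n \<and> Pl k = 1} \<longleftrightarrow> k \<in> {k0}" using k0 by simp
    then show ?thesis by simp
  qed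
  have k0n: "k0 < n" and pk0: "Pl k0 = 1" using mem[of k0] by simp_all
  have "(\<Sum>k'<n. real (k'+1) * of_int (Pl k')) = (\<Sum>k'<n. if k' = k0 then real (k0+1) else 0)"
  proof (rule sum.cong)
    fix k' assume "k' \<in> {..<n}"
    then have kn: "k' < n" by simp
    show "real (k'+1) * of_int (Pl k') = (if k' = k0 then real (k0+1) else 0)"
    proof (cases "k' = k0")
      case True then show ?thesis using pk0 by simp
    next
      case False
      then have "Pl k' \<noteq> 1" using mem[of k'] kn by simp
      moreover have "Pl k' \<in> {0,1}" using vals kn by simp
      ultimately have "Pl k' = 0" by simp
      then show ?thesis using False by simp
    qed
  qed simp
  also have "\<dots> = real (k0+1)" using k0n by simp
  finally show ?thesis using k0n pk0 by blast
qed

lemma perm_major: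
  fixes Q :: "nat \<Rightarrow> nat \<Rightarrow> int"
  assumes vals: "\<forall>a<n. \<forall>k<n. Q a k \<in> {0,1}"
    and c1: "\<forall>a<n. card {k. k<n \<and> Q a k = 1} = 1"
    and c2: "\<forall>k<n. card {a. a<n \<and> Q a k = 1} = 1"
  shows "decr n (\<lambda>a. \<Sum>k<n. real (k+1) * of_int (Q a k)) = decr n (zvec n)"
proof -
  define g where "g a = (SOME k. k<n \<and> Q a k = 1 \<and> (\<Sum>k'<n. real (k'+1) * of_int (Q a k')) = real (k+1))" for a
  have gp: "g a < n \<and> Q a (g a) = 1 \<and> (\<Sum>k'<n. real (k'+1) * of_int (Q a k')) = real (g a+1)"
    if "a < n" for a
  proof -
    have v: "\<forall>k<n. Q a k \<in> {0,1}" using vals that by simp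
    have cc: "card {k. k<n \<and> Q a k = 1} = 1" using c1 that by simp
    have ex: "\<exists>k. k<n \<and> Q a k = 1 \<and> (\<Sum>k'<n. real (k'+1) * of_int (Q a k')) = real (k+1)"
      using perm_line[OF v cc] by blast
    show ?thesis unfolding g_def by (rule someI_ex[OF ex])
  qed
  have inj: "inj_on g {..<n}"
  proof (rule inj_onI)
    fix a b assume a: "a \<in> {..<n}" and b: "b \<in> {..<n}" and e: "g a = g b"
    have an: "a < n" and bn: "b < n" using a b by simp_all
    have kn: "g a < n" and qa: "Q a (g a) = 1" using gp[OF an] by simp_all
    have qb: "Q b (g a) = 1" using gp[OF bn] e by simp
    have "card {a'. a'<n \<and> Q a' (g a) = 1} = 1" using c2 kn by simp
    then obtain a0 where a0: "{a'. a'<n \<and> Q a' (g a) = 1} = {a0}" by (rule card_1_singletonE)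
    have "a \<in> {a'. a'<n \<and> Q a' (g a) = 1}" using an qa by simp
    then have "a = a0" using a0 by simp
    moreover have "b \<in> {a'. a'<n \<and> Q a' (g a) = 1}" using bn qb by simp
    then have "b = a0" using a0 by simp
    ultimately show "a = b" by simp
  qed
  have into: "g ` {..<n} \<subseteq> {..<n}" using gp by auto
  have "decr n (\<lambda>a. \<Sum>k<n. real (k+1) * of_int (Q a k)) = decr n (\<lambda>a. real (g a + 1))"
  proof (rule decr_cong)
    fix a assume "a < n"
    then show "(\<Sum>k<n. real (k+1) * of_int (Q a k)) = real (g a + 1)" using gp by simp
  qed
  also have "\<dots> = decr n (zvec n)" using perm_decr[OF inj into] .
  finally show ?thesis .
qed

theorem mainTheorem5:
  fixes n :: nat and A P :: hypermatrix
  assumes "ASHM n A" and "perm_hypermatrix n P"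
  shows "lmaj n (Lmat n A) (Lmat n P) \<and>
         (\<forall>i<n. majorized n (\<lambda>j. Lmat n A i j) (zvec n)) \<and>
         (\<forall>j<n. majorized n (\<lambda>i. Lmat n A i j) (zvec n))"
proof -
  have A1: "\<forall>i<n. \<forall>j<n. alt_sign_line (map (\<lambda>k. A i j k) [0..<n])"
   and A2: "\<forall>i<n. \<forall>k<n. alt_sign_line (map (\<lambda>j. A i j k) [0..<n])"
   and A3: "\<forall>j<n. \<forall>k<n. alt_sign_line (map (\<lambda>i. A i j k) [0..<n])"
    using assms(1) unfolding ASHM_def by blast+
  have P0: "\<forall>i<n. \<forall>j<n. \<forall>k<n. P i j k \<in> {0, 1}"
   and P1: "\<forall>i<n. \<forall>j<n. card {k. k < n \<and> P i j k = 1} = 1"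
   and P2: "\<forall>i<n. \<forall>k<n. card {j. j < n \<and> P i j k = 1} = 1"
   and P3: "\<forall>j<n. \<forall>k<n. card {i. i < n \<and> P i j k = 1} = 1"
    using assms(2) unfolding perm_hypermatrix_def by blast+
  have rA: "majorized n (\<lambda>j. Lmat n A i j) (zvec n)" if "i < n" for i
  proof -
    have h1: "\<And>j. j < n \<Longrightarrow> alt_sign_line (map (\<lambda>k. A i j k) [0..<n])" using A1 that by blast
    have h2: "\<And>k. k < n \<Longrightarrow> alt_sign_line (map (\<lambda>j. A i j k) [0..<n])" using A2 that by blast
    show ?thesis unfolding Lmat_def by (rule asm_major[of n "\<lambda>j k. A i j k", OF h1 h2])
  qed
  have cA: "majorized n (\<lambda>i. Lmat n A i j) (zvec n)" if "j < n" for j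
  proof -
    have h1: "\<And>i. i < n \<Longrightarrow> alt_sign_line (map (\<lambda>k. A i j k) [0..<n])" using A1 that by blast
    have h2: "\<And>k. k < n \<Longrightarrow> alt_sign_line (map (\<lambda>i. A i j k) [0..<n])" using A3 that by blast
    show ?thesis unfolding Lmat_def by (rule asm_major[of n "\<lambda>i k. A i j k", OF h1 h2])
  qed
  have rP: "decr n (\<lambda>j. Lmat n P i j) = decr n (zvec n)" if "i < n" for i
  proof -
    have h0: "\<forall>a<n. \<forall>k<n. P i a k \<in> {0,1}" using P0 that by blast
    have h1: "\<forall>a<n. card {k. k<n \<and> P i a k = 1} = 1" using P1 that by blast
    have h2: "\<forall>k<n. card {a. a<n \<and> P i a k = 1} = 1" using P2 that by blast
    show ?thesis unfolding Lmat_def by (rule perm_major[of n "\<lambda>a k. P i a k", OF h0 h1 h2])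
  qed
  have cP: "decr n (\<lambda>i. Lmat n P i j) = decr n (zvec n)" if "j < n" for j
  proof -
    have h0: "\<forall>a<n. \<forall>k<n. P a j k \<in> {0,1}" using P0 that by blast
    have h1: "\<forall>a<n. card {k. k<n \<and> P a j k = 1} = 1" using P1 that by blast
    have h2: "\<forall>k<n. card {a. a<n \<and> P a j k = 1} = 1" using P3 that by blast
    show ?thesis unfolding Lmat_def by (rule perm_major[of n "\<lambda>a k. P a j k", OF h0 h1 h2])
  qed
  have lm: "lmaj n (Lmat n A) (Lmat n P)"
    unfolding lmaj_def
  proof (intro conjI allI impI)
    fix i assume "i < n"
    then show "majorized n (\<lambda>j. Lmat n A i j) (\<lambda>j. Lmat n P i j)"
      using rA[OF \<open>i < n\<close>] unfolding majorized_def rP[OF \<open>i < n\<close>] by blast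
  next
    fix j assume "j < n"
    then show "majorized n (\<lambda>i. Lmat n A i j) (\<lambda>i. Lmat n P i j)"
      using cA[OF \<open>j < n\<close>] unfolding majorized_def cP[OF \<open>j < n\<close>] by blast
  qed
  show ?thesis
  proof (intro conjI allI impI)
    show "lmaj n (Lmat n A) (Lmat n P)" by (rule lm)
  next
    fix i assume "i < n"
    then show "majorized n (\<lambda>j. Lmat n A i j) (zvec n)" by (rule rA)
  next
    fix j assume "j < n"
    then show "majorized n (\<lambda>i. Lmat n A i j) (zvec n)" by (rule cA)
  qed
qed

end
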